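(* Let $K>0$, $r=1/K$, and let $p:[0,L]\to\mathbb{R}^d$ be the arc length parametrisation of an open equilateral polygon of length $L$ with vertices $p(a_0),\dots,p(a_n)$, $0=a_0<\dots<a_n=L$, such that $\mathrm{maxCurv}_2(p)\le K$ and $KL\le\pi/2$. Suppose $p$ touches the sphere $\partial B_r(c)$ tangentially at its endpoint $p(0)$, i.e. $|p(0)-c|=r$ and the direction of the first edge $p(a_1)-p(a_0)$ is orthogonal to $p(0)-c$. Then $|p(a_k)-c|>r$ for all $k=1,\dots,n$.
   Context: For an open polygon $p$ with vertices $y_k=p(a_k)$, the discrete curvature at an interior vertex $y_k$ ($1\le k\le n-1$) is $\kappa_{d,2}(y_{k-1},y_k,y_{k+1})=\frac{\phi_k}{(|y_{k-1}-y_k|+|y_{k+1}-y_k|)/2}$, where $\phi_k=\measuredangle(y_k-y_{k-1},y_{k+1}-y_k)\in[0,\pi]$ is the exterior angle at $y_k$; $\mathrm{maxCurv}_2(p)$ is the maximum of $\kappa_{d,2}$ over all interior vertices. *)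

theory Defs
  imports "HOL-Analysis.Analysis"
begin

definition vangle :: "'a::euclidean_space \<Rightarrow> 'a \<Rightarrow> real" where
  "vangle u v = arccos ((u \<bullet> v) / (norm u * norm v))"

definition kappa_d2 :: "'a::euclidean_space \<Rightarrow> 'a \<Rightarrow> 'a \<Rightarrow> real" where
  "kappa_d2 x y z = vangle (y - x) (z - y) / ((norm (x - y) + norm (z - y)) / 2)"

text \<open>maxCurv_2 of the open polygon with vertices y 0, ..., y n: the maximum of
  kappa_d2 over the interior vertices 1..n-1.  All curvatures are nonnegative;
  the 0 inserted only matters (as a harmless convention) when there is no interior vertex.\<close>
definition maxCurv2 :: "(nat \<Rightarrow> 'a::euclidean_space) \<Rightarrow> nat \<Rightarrow> real" where
  "maxCurv2 y n = Max (insert 0 ((\<lambda>k. kappa_d2 (y (k - 1)) (y k) (y (k + 1))) ` {1..<n}))"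

end

theory Submission
  imports Defs
begin


lemma tri_ineq:
  fixes a b d :: "'a::real_inner"
  assumes "norm a = 1" "norm b = 1" "norm d = 1" "a \<bullet> b \<ge> cos x" "b \<bullet> d \<ge> cos z"
    "0 \<le> x" "0 \<le> z" "x + z \<le> pi"
  shows "a \<bullet> d \<ge> cos (x + z)"
proof -
  define p where "p = a \<bullet> b"
  define q where "q = b \<bullet> d"
  have bb: "b \<bullet> b = 1" using assms(2) by (simp add: norm_eq_1)
  have aa: "a \<bullet> a = 1" using assms(1) by (simp add: norm_eq_1)
  have dd: "d \<bullet> d = 1" using assms(3) by (simp add: norm_eq_1)
  have p1: "\<bar>p\<bar> \<le> 1" unfolding p_def using Cauchy_Schwarz_ineq2[of a b] assms by simp
  have q1: "\<bar>q\<bar> \<le> 1" unfolding q_def using Cauchy_Schwarz_ineq2[of b d] assms by simp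
  have e1: "(a - p *\<^sub>R b) \<bullet> (d - q *\<^sub>R b) = a \<bullet> d - p * q"
    by (simp add: inner_diff_left inner_diff_right bb p_def q_def inner_commute algebra_simps)
  have n1: "(norm (a - p *\<^sub>R b))^2 = 1 - p^2"
    unfolding power2_norm_eq_inner by (simp add: inner_diff_left inner_diff_right bb aa p_def inner_commute algebra_simps power2_eq_square)
  have n2: "(norm (d - q *\<^sub>R b))^2 = 1 - q^2"
    unfolding power2_norm_eq_inner by (simp add: inner_diff_left inner_diff_right bb dd q_def inner_commute algebra_simps power2_eq_square)
  have "norm (a - p *\<^sub>R b) = sqrt (1 - p^2)" using n1 by (metis norm_ge_zero real_sqrt_abs abs_of_nonneg real_sqrt_unique)
  moreover have "norm (d - q *\<^sub>R b) = sqrt (1 - q^2)" using n2 by (metis norm_ge_zero real_sqrt_abs abs_of_nonneg real_sqrt_unique)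
  ultimately have "a \<bullet> d - p * q \<ge> - (sqrt (1 - p^2) * sqrt (1 - q^2))"
    using e1 Cauchy_Schwarz_ineq2[of "a - p *\<^sub>R b" "d - q *\<^sub>R b"] by (simp add: abs_le_iff)
  moreover have "cos (arccos p + arccos q) = p * q - sqrt (1 - p^2) * sqrt (1 - q^2)"
    using p1 q1 by (simp add: cos_add sin_arccos)
  moreover have "arccos p \<le> x"
  proof -
    have "cos x \<le> p" using assms(4) p_def by simp
    hence "arccos p \<le> arccos (cos x)" using p1 by (intro arccos_le_mono[THEN iffD2]) (auto simp: abs_le_iff)
    also have "\<dots> = x" using assms by (intro arccos_cos) auto
    finally show ?thesis .
  qed
  moreover have "arccos q \<le> z"
  proof -
    have "cos z \<le> q" using assms(5) q_def by simp
    hence "arccos q \<le> arccos (cos z)" using q1 by (intro arccos_le_mono[THEN iffD2]) (auto simp: abs_le_iff)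
    also have "\<dots> = z" using assms by (intro arccos_cos) auto
    finally show ?thesis .
  qed
  moreover have "0 \<le> arccos p" "0 \<le> arccos q" using p1 q1 by (auto intro!: arccos_lbound simp: abs_le_iff)
  ultimately have "cos (x + z) \<le> cos (arccos p + arccos q)"
    using assms by (intro cos_monotone_0_pi_le) auto
  thus ?thesis using \<open>a \<bullet> d - p * q \<ge> _\<close> \<open>cos (arccos p + arccos q) = _\<close> by linarith
qed

lemma bessel2:
  fixes t u v :: "'a::real_inner"
  assumes "norm t = 1" "norm u = 1" "t \<bullet> u = 0"
  shows "(t \<bullet> v)^2 + (u \<bullet> v)^2 \<le> (norm v)^2"
proof -
  have tt: "t \<bullet> t = 1" using assms(1) by (simp add: norm_eq_1)
  have uu: "u \<bullet> u = 1" using assms(2) by (simp add: norm_eq_1)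
  have ut: "u \<bullet> t = 0" using assms(3) by (simp add: inner_commute)
  have "0 \<le> (norm (v - (t \<bullet> v) *\<^sub>R t - (u \<bullet> v) *\<^sub>R u))^2" by simp
  also have "\<dots> = (norm v)^2 - (t \<bullet> v)^2 - (u \<bullet> v)^2"
    unfolding power2_norm_eq_inner by (simp add: inner_diff_left inner_diff_right tt uu ut assms(3) inner_commute algebra_simps power2_eq_square)
  finally show ?thesis by simp
qed

lemma sum_cos_id:
  fixes x :: real
  shows "sin x * (\<Sum>j<k. cos (2 * real j * x)) = sin (real k * x) * cos (real k * x - x)"
proof (induction k)
  case 0 then show ?case by simp
next
  case (Suc k)
  have "sin x * (\<Sum>j<Suc k. cos (2 * real j * x)) = sin x * cos (2 * real k * x) + sin (real k * x) * cos (real k * x - x)"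
    using Suc by (simp add: distrib_left)
  also have "\<dots> = sin (real (Suc k) * x) * cos (real (Suc k) * x - x)"
  proof -
    have e: "real (Suc k) * x - x = real k * x" "2 * real k * x = real k * x + real k * x" "real (Suc k) * x = real k * x + x" by (auto simp: algebra_simps)
    show ?thesis unfolding e(1) unfolding e(2,3) sin_add cos_add sin_diff cos_diff by (simp add: algebra_simps)
  qed
  finally show ?case .
qed

lemma sum_sin_id:
  fixes x :: real
  shows "sin x * (\<Sum>j<k. sin (2 * real j * x)) = sin (real k * x) * sin (real k * x - x)"
proof (induction k)
  case 0 then show ?case by simp
next
  case (Suc k)
  have "sin x * (\<Sum>j<Suc k. sin (2 * real j * x)) = sin x * sin (2 * real k * x) + sin (real k * x) * sin (real k * x - x)"
    using Suc by (simp add: distrib_left)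
  also have "\<dots> = sin (real (Suc k) * x) * sin (real (Suc k) * x - x)"
  proof -
    have e: "real (Suc k) * x - x = real k * x" "2 * real k * x = real k * x + real k * x" "real (Suc k) * x = real k * x + x" by (auto simp: algebra_simps)
    show ?thesis unfolding e(1) unfolding e(2,3) sin_add cos_add sin_diff cos_diff by (simp add: algebra_simps)
  qed
  finally show ?case .
qed



lemma trig_final:
  fixes x :: real and k :: nat
  assumes x: "0 < x" and k: "k \<ge> 1" and kx: "real k * x \<le> pi / 4"
  defines "A \<equiv> (\<Sum>j<k. cos (2 * real j * x))" and "B \<equiv> (\<Sum>j<k. sin (2 * real j * x))"
  shows "2 * x * (A^2 + B^2) > 2 * B" "A \<ge> B" "A > 0" "B \<ge> 0"
proof -
  define s where "s = sin x"
  define S where "S = sin (real k * x)"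
  define P where "P = sin (real k * x - x)"
  define Q where "Q = cos (real k * x - x)"
  have xk: "x \<le> real k * x" using k x by (simp add: mult_le_cancel_right1)
  have pi4: "pi / 4 < pi / 2" "pi/4 < pi" using pi_gt_zero by linarith+
  have xpi: "x < pi" "real k * x < pi" using xk kx pi4 by linarith+
  have hh: "0 \<le> real k * x - x" "real k * x - x \<le> pi/4" "real k * x \<le> pi/2" "-(pi/2) \<le> real k * x - x" "real k * x - x \<le> pi/2 - (real k * x - x)"
    using xk kx pi4 x by linarith+
  have s0: "s > 0" unfolding s_def using x xk kx pi4 xpi by (intro sin_gt_zero) auto
  have S0: "S > 0" unfolding S_def using x xk kx pi4 xpi by (intro sin_gt_zero) auto
  have P0: "P \<ge> 0" unfolding P_def using x xk kx pi4 xpi by (intro sin_ge_zero) auto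
  have PS: "P \<le> S" unfolding P_def S_def using x xk kx pi4 hh xpi
    by (intro sin_monotone_2pi_le) auto
  have PQ: "P \<le> Q"
  proof -
    have "P \<le> sin (pi/2 - (real k * x - x))" unfolding P_def using x xk kx pi4 hh xpi
      by (intro sin_monotone_2pi_le) auto
    thus ?thesis unfolding Q_def by (simp add: sin_cos_eq)
  qed
  have sx: "s \<le> x" unfolding s_def using x by (simp add: sin_x_le_x)
  have PS': "P < S" unfolding P_def S_def using x xk kx pi4 hh xpi
    by (intro sin_monotone_2pi) auto
  have PQ1: "P^2 + Q^2 = 1" unfolding P_def Q_def by simp
  have As: "s * A = S * Q" unfolding A_def S_def Q_def s_def by (rule sum_cos_id)
  have Bs: "s * B = S * P" unfolding B_def S_def P_def s_def by (rule sum_sin_id)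
  have Aeq: "A = S * Q / s" using As s0 by (simp add: field_simps)
  have Beq: "B = S * P / s" using Bs s0 by (simp add: field_simps)
  show "A \<ge> B" unfolding Aeq Beq using S0 s0 PQ by (intro divide_right_mono mult_left_mono) auto
  show "B \<ge> 0" unfolding Beq using S0 s0 P0 by simp
  have Q0: "Q > 0" unfolding Q_def using hh pi4 by (intro cos_gt_zero_pi) linarith+
  show "A > 0" unfolding Aeq using S0 s0 Q0 by simp
  have "s * P < x * S"
  proof -
    have "s * P < s * S" using s0 PS' by simp
    also have "\<dots> \<le> x * S" using sx S0 by simp
    finally show ?thesis .
  qed
  hence "2 * S * P * s < 2 * x * S^2" using S0 by (simp add: power2_eq_square algebra_simps)
  hence "2 * S * P * s < 2 * x * (S^2 * (P^2+Q^2))" using PQ1 by simp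
  hence "2 * (S * P / s) < 2 * x * ((S * Q / s)^2 + (S * P / s)^2)"
    using s0 by (simp add: field_simps power2_eq_square)
  thus "2 * x * (A^2 + B^2) > 2 * B" unfolding Aeq Beq .
qed

lemma alg_final:
  fixes a b h A B K :: real
  assumes "a \<ge> h * A" "b \<ge> - (h * B)" "A \<ge> B" "B \<ge> 0" "A > 0" "h > 0" "K > 0"
    "K * h * (A^2 + B^2) > 2 * B"
  shows "a^2 + b^2 + 2 * (1/K) * b > 0"
proof -
  define r where "r = 1 / K"
  have r0: "r > 0" using assms r_def by simp
  have a0: "a > 0" using assms mult_pos_pos[of h A] by linarith
  have aA: "a^2 \<ge> (h*A)^2" using assms a0 by (intro power_mono) auto
  have AB: "(h*A)^2 \<ge> (h*B)^2" using assms by (intro power_mono) auto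
  have "a^2 + b^2 + 2 * r * b > 0"
  proof (cases "b \<ge> 0")
    case True
    have "h * A > 0" using assms by simp
    have "a^2 > 0" using a0 by simp
    moreover have "2*r*b \<ge> 0" using r0 True by simp
    moreover have "b^2 \<ge> 0" by simp
    ultimately show ?thesis by linarith
  next
    case False
    define m where "m = - b"
    have m0: "m > 0" and mh: "m \<le> h * B" using False assms m_def by auto
    have mr: "m * (2*r - m) \<le> r^2"
    proof -
      have "(r-m)^2 \<ge> 0" by simp
      thus ?thesis by (simp add: power2_eq_square algebra_simps)
    qed
    show ?thesis
    proof (cases "h * B > r")
      case True
      have "r^2 < (h*B)^2" using True r0 by (intro power_strict_mono) auto
      thus ?thesis using aA AB mr m_def by (simp add: power2_eq_square algebra_simps)
    next
      case False
      hence "(h*B - m) * (2*r - h*B - m) \<ge> 0" using mh m0 by (intro mult_nonneg_nonneg) linarith+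
      hence "m * (2*r - m) \<le> (h*B) * (2*r - h*B)" by (simp add: algebra_simps)
      moreover have "(h*B) * (2*r - h*B) < (h*A)^2"
      proof -
        have "h * (2 * B) < h * (K * h * (A^2 + B^2))" using assms by simp
        hence "r * (h * (2 * B)) < r * (h * (K * h * (A^2 + B^2)))" using r0 by simp
        moreover have "r * (h * (K * h * (A^2+B^2))) = h^2 * (A^2+B^2)"
        proof -
          have rK: "r * K = 1" using r_def assms by simp
          have "r * (h * (K * h * (A^2+B^2))) = (r * K) * (h^2 * (A^2+B^2))" by (simp add: algebra_simps power2_eq_square)
          thus ?thesis using rK by simp
        qed
        ultimately have "2 * r * h * B < h^2 * (A^2+B^2)" by (simp add: algebra_simps)
        thus ?thesis by (simp add: power2_eq_square algebra_simps)
      qed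
      ultimately show ?thesis using aA m_def by (simp add: power2_eq_square algebra_simps)
    qed
  qed
  thus ?thesis unfolding r_def .
qed



theorem corollary7:
  fixes y :: "nat \<Rightarrow> 'a::euclidean_space" and n :: nat and L K :: real and c :: 'a
  assumes "K > 0"
    and "n \<ge> 1"
    and "L > 0"
    and "\<forall>k<n. norm (y (Suc k) - y k) = L / real n"
    and "maxCurv2 y n \<le> K"
    and "K * L \<le> pi / 2"
    and "norm (y 0 - c) = 1 / K"
    and "(y 1 - y 0) \<bullet> (y 0 - c) = 0"
  shows "\<forall>k\<in>{1..n}. norm (y k - c) > 1 / K"
proof -
  define h where "h = L / real n"
  have h0: "h > 0" unfolding h_def using assms(2,3) by simp
  define th where "th = K * h"
  define x where "x = th / 2"
  define r where "r = 1 / K"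
  have r0: "r > 0" unfolding r_def using assms(1) by simp
  have rK: "r * K = 1" unfolding r_def using assms(1) by simp
  define d where "d j = (1/h) *\<^sub>R (y (Suc j) - y j)" for j
  define u where "u = K *\<^sub>R (y 0 - c)"
  have th0: "th > 0" unfolding th_def using h0 assms(1) by simp
  have thn: "real n * th \<le> pi / 2"
  proof -
    have "real n * th = K * L" unfolding th_def h_def using assms(2) by simp
    thus ?thesis using assms(6) by simp
  qed
  have thpi: "th \<le> pi / 2"
  proof -
    have "th \<le> real n * th" using assms(2) th0 by (simp add: mult_le_cancel_right1)
    thus ?thesis using thn by linarith
  qed
  have eh: "\<And>j. j < n \<Longrightarrow> norm (y (Suc j) - y j) = h" using assms(4) h_def by simp
  have nd: "norm (d j) = 1" if "j < n" for j
    unfolding d_def using eh[OF that] h0 by simp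
  have nu: "norm u = 1" unfolding u_def using assms(1,7) by simp
  have d0u: "d 0 \<bullet> u = 0" unfolding d_def u_def using assms(8) by (simp add: inner_commute)
  have yc: "y 0 - c = r *\<^sub>R u" unfolding u_def using rK by simp
  have curv: "d j \<bullet> d (Suc j) \<ge> cos th" if j: "Suc j < n" for j
  proof -
    define e1 where "e1 = y (Suc j) - y j"
    define e2 where "e2 = y (Suc (Suc j)) - y (Suc j)"
    have n1: "norm e1 = h" unfolding e1_def using eh j by simp
    have n2: "norm e2 = h" unfolding e2_def using eh j by simp
    have n1': "norm (y j - y (Suc j)) = h" using n1 unfolding e1_def by (simp add: norm_minus_commute)
    define f where "f k = kappa_d2 (y (k - 1)) (y k) (y (k + 1))" for k
    have "f (Suc j) \<le> maxCurv2 y n"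
      unfolding maxCurv2_def f_def[symmetric] using j by (intro Max_ge) auto
    hence "f (Suc j) \<le> K" using assms(5) by simp
    moreover have "f (Suc j) = vangle e1 e2 / h"
      unfolding f_def kappa_d2_def using n1' n2 e1_def e2_def by simp
    ultimately have va: "vangle e1 e2 \<le> th" unfolding th_def using h0 by (simp add: divide_le_eq mult.commute)
    define v where "v = d j \<bullet> d (Suc j)"
    have vv: "v = e1 \<bullet> e2 / (norm e1 * norm e2)" unfolding v_def d_def e1_def e2_def n1 n2
      using n1 n2 unfolding e1_def e2_def by simp
    have v1: "\<bar>v\<bar> \<le> 1" unfolding v_def using Cauchy_Schwarz_ineq2[of "d j" "d (Suc j)"] nd j by simp
    have "arccos v \<le> th" using va vv unfolding vangle_def by simp
    hence "cos th \<le> cos (arccos v)" using th0 thpi v1 assms(2)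
      by (intro cos_monotone_0_pi_le) (auto intro!: arccos_lbound simp: abs_le_iff)
    thus ?thesis using v1 unfolding v_def by (simp add: abs_le_iff)
  qed
  have dd: "d 0 \<bullet> d j \<ge> cos (2 * real j * x)" if "j < n" for j
    using that
  proof (induction j)
    case 0 then show ?case using nd[of 0] by (simp add: norm_eq_1)
  next
    case (Suc j)
    have jt: "real (Suc j) * th \<le> real n * th" using Suc.prems th0 by (intro mult_right_mono) auto
    have jx: "2*real j*x + th = real (Suc j) * th" unfolding x_def by (simp add: algebra_simps)
    have jp: "2*real j*x + th \<le> pi" unfolding jx using jt thn pi_gt_zero by linarith
    have jx0: "0 \<le> 2*real j*x" unfolding x_def using th0 by simp
    have "cos (2 * real j * x + th) \<le> d 0 \<bullet> d (Suc j)"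
      using Suc.IH Suc.prems curv[of j] nd[of 0] nd[of j] nd[of "Suc j"] th0 jp jx0
      by (intro tri_ineq[where b = "d j"]) auto
    moreover have "2 * real j * x + th = 2 * real (Suc j) * x" unfolding x_def by (simp add: algebra_simps)
    ultimately show ?case by simp
  qed
  have jth: "0 \<le> 2 * real j * x \<and> 2 * real j * x \<le> pi / 2" if "j < n" for j
  proof -
    have jn: "real j * th \<le> real n * th" using that th0 by (intro mult_right_mono) auto
    have e: "2 * real j * x = real j * th" unfolding x_def by simp
    have "0 \<le> real j * th" using th0 by simp
    thus ?thesis unfolding e using jn thn by linarith
  qed
  have ud: "u \<bullet> d j \<ge> - sin (2 * real j * x)" if j: "j < n" for j
  proof -
    have b: "(d 0 \<bullet> d j)^2 + (u \<bullet> d j)^2 \<le> (norm (d j))^2"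
      using nd[of 0] nd[of j] nu d0u j assms(2) by (intro bessel2) auto
    have c0: "cos (2 * real j * x) \<ge> 0" using jth[OF j] pi_gt_zero by (intro cos_ge_zero) linarith+
    have s0: "sin (2 * real j * x) \<ge> 0" using jth[OF j] pi_gt_zero by (intro sin_ge_zero) linarith+
    have "(cos (2 * real j * x))^2 \<le> (d 0 \<bullet> d j)^2" using dd[OF j] c0 by (intro power_mono) auto
    hence "(u \<bullet> d j)^2 \<le> (sin (2 * real j * x))^2" using b[unfolded nd[OF j] power_one] sin_cos_squared_add[of "2 * real j * x"] by linarith
    hence "\<bar>u \<bullet> d j\<bar> \<le> \<bar>sin (2 * real j * x)\<bar>" by (simp add: abs_le_square_iff)
    thus ?thesis using s0 by (simp add: abs_le_iff)
  qed
  have ysum: "y k - y 0 = h *\<^sub>R (\<Sum>j<k. d j)" for k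
  proof (induction k)
    case 0 then show ?case by simp
  next
    case (Suc k)
    have "y (Suc k) - y 0 = (y k - y 0) + (y (Suc k) - y k)" by simp
    also have "\<dots> = h *\<^sub>R (\<Sum>j<k. d j) + h *\<^sub>R d k" unfolding Suc d_def using h0 by simp
    finally show ?case by (simp add: scaleR_right_distrib)
  qed
  show ?thesis
  proof
    fix k assume k: "k \<in> {1..n}"
    define w where "w = y k - y 0"
    define A where "A = (\<Sum>j<k. cos (2 * real j * x))"
    define B where "B = (\<Sum>j<k. sin (2 * real j * x))"
    define a where "a = d 0 \<bullet> w"
    define b where "b = u \<bullet> w"
    have ha: "a \<ge> h * A"
    proof -
      have "a = h * (\<Sum>j<k. d 0 \<bullet> d j)" unfolding a_def w_def ysum by (simp add: inner_sum_right)
      moreover have "(\<Sum>j<k. d 0 \<bullet> d j) \<ge> A" unfolding A_def using k dd by (intro sum_mono) auto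
      ultimately show ?thesis using h0 by simp
    qed
    have hb: "b \<ge> - (h * B)"
    proof -
      have "b = h * (\<Sum>j<k. u \<bullet> d j)" unfolding b_def w_def ysum by (simp add: inner_sum_right)
      moreover have "(\<Sum>j<k. u \<bullet> d j) \<ge> - B" unfolding B_def using k ud
        by (simp add: sum_negf[symmetric]) (intro sum_mono, auto)
      ultimately show ?thesis using h0 mult_left_mono[of "- B" "\<Sum>j<k. u \<bullet> d j" h] by simp
    qed
    have kx: "real k * x \<le> pi / 4"
    proof -
      have jn: "real k * th \<le> real n * th" using k th0 by (intro mult_right_mono) auto
      have e: "real k * x = real k * th / 2" unfolding x_def by simp
      show ?thesis unfolding e using jn thn by linarith
    qed
    have x0: "x > 0" unfolding x_def using th0 by simp
    note tf = trig_final[OF x0 _ kx, folded A_def B_def]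
    have k1: "k \<ge> 1" using k by simp
    have "K * h * (A^2 + B^2) > 2 * B" using tf(1)[OF k1] unfolding x_def th_def by simp
    hence pos: "a^2 + b^2 + 2 * (1/K) * b > 0"
      using alg_final[OF ha hb tf(2)[OF k1] tf(4)[OF k1] tf(3)[OF k1] h0 assms(1)] by simp
    have bes: "a^2 + b^2 \<le> (norm w)^2" unfolding a_def b_def
      using nd[of 0] nu d0u assms(2) by (intro bessel2) auto
    have "y k - c = w + r *\<^sub>R u" unfolding w_def using yc by (simp add: algebra_simps)
    hence "(norm (y k - c))^2 = (norm w)^2 + 2 * r * b + r^2"
      unfolding power2_norm_eq_inner b_def using nu
      by (simp add: inner_add_left inner_add_right inner_commute norm_eq_1 algebra_simps power2_eq_square)
    hence "(norm (y k - c))^2 > r^2" using pos bes unfolding r_def by linarith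
    hence "norm (y k - c) > r" by (rule power2_less_imp_less) simp
    thus "norm (y k - c) > 1 / K" unfolding r_def .
  qed
qed

end
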